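(* Let $n\ge 1$ be an integer and let $\Phi$ be the $n$-dimensional Matérn cluster process with parent intensity $\lambda_{\mathrm p}>0$, daughter intensity $\lambda_{\mathrm d}>0$ and cluster radius $r_{\mathrm d}>0$, and let $F_{R_{\mathrm C}}(r)=\mathbb P(R_{\mathrm C}\le r)$ with $R_{\mathrm C}=\min_{\mathbf z\in\Phi}\|\mathbf z\|$. Then for every $r>0$, \[ 1-\exp\!\left(-v_n\lambda_{\mathrm p}|r-r_{\mathrm d}|^n\left(1-e^{-\lambda_{\mathrm d}v_n\beta(r)^n}\right)\right)\le F_{R_{\mathrm C}}(r)\le 1-\exp\!\left(-v_n\lambda_{\mathrm p}(r+r_{\mathrm d})^n\left(1-e^{-v_n\lambda_{\mathrm d}\beta(r)^n}\right)\right). \]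
   Context: The $n$-dimensional Matérn cluster process: $\Phi_{\mathrm p}=\{\mathbf x_i\}$ is a homogeneous Poisson point process in $\mathbb R^n$ of intensity $\lambda_{\mathrm p}$; each parent $\mathbf x_i$ receives an independent daughter process $\Phi_{\mathrm d}^{(i)}$, a homogeneous Poisson point process of intensity $\lambda_{\mathrm d}$ restricted to the ball $\mathcal B(\mathrm o,r_{\mathrm d})$ centered at the origin, independent of $\Phi_{\mathrm p}$; $\Phi=\bigcup_i(\mathbf x_i+\Phi_{\mathrm d}^{(i)})$. $v_n$ is the volume of the unit ball in $\mathbb R^n$ and $\beta(r)=\min\{r,r_{\mathrm d}\}$. *)

theory Defs
  imports "HOL-Probability.Probability"
begin

definition count_pts :: "'a set \<Rightarrow> 'a set \<Rightarrow> enat" where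
  "count_pts S B = (if finite (S \<inter> B) then enat (card (S \<inter> B)) else \<infinity>)"

definition pp_sets :: "('a::topological_space) set measure" where
  "pp_sets = sigma UNIV {{S. count_pts S B = k} | B k. B \<in> sets borel}"

definition poisson_pp :: "'w measure \<Rightarrow> ('w \<Rightarrow> 'a::topological_space set) \<Rightarrow> 'a measure \<Rightarrow> bool" where
  "poisson_pp M N mu \<longleftrightarrow>
     prob_space M \<and> N \<in> measurable M pp_sets \<and>
     (\<forall>B \<in> sets borel. emeasure mu B < \<infinity> \<longrightarrow>
        (\<forall>k::nat. measure M {\<omega> \<in> space M. count_pts (N \<omega>) B = enat k}
                 = exp (- measure mu B) * measure mu B ^ k / fact k)) \<and>
     (\<forall>(B :: nat \<Rightarrow> 'a set) m. (\<forall>i<m. B i \<in> sets borel \<and> emeasure mu (B i) < \<infinity>) \<and>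
        disjoint_family_on B {..<m} \<longrightarrow>
        prob_space.indep_vars M (\<lambda>_. count_space UNIV) (\<lambda>i \<omega>. count_pts (N \<omega>) (B i)) {..<m})"

definition matern_cluster :: "(nat \<Rightarrow> 'w \<Rightarrow> 'a::real_vector) \<Rightarrow> (nat \<Rightarrow> 'w \<Rightarrow> 'a set) \<Rightarrow> 'w \<Rightarrow> 'a set" where
  "matern_cluster X D \<omega> = (\<Union>i. (\<lambda>y. X i \<omega> + y) ` D i \<omega>)"

definition contact_dist :: "'a::real_normed_vector set \<Rightarrow> ereal" where
  "contact_dist S = (INF z\<in>S. ereal (norm z))"

end

theory Submission
  imports Defs
begin


lemma space_pp_sets: "space pp_sets = UNIV"
  unfolding pp_sets_def by (simp add: space_measure_of_conv)

lemma sets_pp_sets: "sets pp_sets = sigma_sets UNIV {{S. count_pts S B = k} | B k. B \<in> sets borel}"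
  unfolding pp_sets_def by (rule sets_measure_of) auto

lemma pp_count_sets: "B \<in> sets borel \<Longrightarrow> {S. count_pts S B = k} \<in> sets pp_sets"
  unfolding sets_pp_sets by (rule sigma_sets.Basic) blast

lemma count_pts_0_iff: "count_pts S B = enat 0 \<longleftrightarrow> S \<inter> B = {}"
  unfolding count_pts_def by (auto simp: enat_0_iff)

lemma pp_empty_sets: "B \<in> sets borel \<Longrightarrow> {S. S \<inter> B = {}} \<in> sets pp_sets"
  using pp_count_sets[of B "enat 0"] by (simp add: count_pts_0_iff)

lemma vol_ball: fixes c :: "'a::euclidean_space" assumes "t \<ge> 0"
  shows "measure lborel (ball c t) = measure lborel (ball (0::'a) 1) * t ^ DIM('a)"
  using content_ball[OF assms, of c] content_ball[of 1 "0::'a"] by simp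

lemma emeasure_ball_finite: fixes c :: "'a::euclidean_space"
  shows "emeasure lborel (ball c t) < \<infinity>"
proof (cases "t \<ge> 0")
  case True then show ?thesis using emeasure_ball[OF True, of c] by simp
next
  case False then show ?thesis by (subst ball_empty) auto
qed

lemma parent_measure: fixes B :: "'a::euclidean_space set"
  assumes "B \<in> sets borel" "emeasure lborel B < \<infinity>" "lp \<ge> 0"
  shows "emeasure (density lborel (\<lambda>_. ennreal lp)) B < \<infinity>"
    "measure (density lborel (\<lambda>_. ennreal lp)) B = lp * measure lborel B"
proof -
  have e: "emeasure (density lborel (\<lambda>_. ennreal lp)) B = ennreal lp * emeasure lborel B"
    using assms by (simp add: emeasure_density nn_integral_cmult_indicator)
  show "emeasure (density lborel (\<lambda>_. ennreal lp)) B < \<infinity>"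
    using assms by (simp add: e ennreal_mult_less_top)
  show "measure (density lborel (\<lambda>_. ennreal lp)) B = lp * measure lborel B"
    using assms by (simp add: measure_def e enn2real_mult)
qed

lemma daughter_measure: fixes B :: "'a::euclidean_space set"
  assumes "B \<in> sets borel" "ld \<ge> 0"
  shows "emeasure (density lborel (\<lambda>x. ennreal ld * indicator (ball 0 rd) x)) B < \<infinity>"
    "measure (density lborel (\<lambda>x. ennreal ld * indicator (ball 0 rd) x)) B = ld * measure lborel (B \<inter> ball 0 rd)"
proof -
  have e: "emeasure (density lborel (\<lambda>x. ennreal ld * indicator (ball 0 rd) x)) B = ennreal ld * emeasure lborel (B \<inter> ball 0 rd)"
  proof -
    have "\<And>x. ennreal ld * indicator (ball 0 rd) x * indicator B x = ennreal ld * indicator (B \<inter> ball 0 rd) x"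
      by (simp split: split_indicator)
    then have "emeasure (density lborel (\<lambda>x. ennreal ld * indicator (ball 0 rd) x)) B =
       (\<integral>\<^sup>+x. ennreal ld * indicator (B \<inter> ball 0 rd) x \<partial>lborel)"
      using assms by (subst emeasure_density) (auto intro!: borel_measurable_times_ennreal borel_measurable_indicator)
    also have "\<dots> = ennreal ld * emeasure lborel (B \<inter> ball 0 rd)"
      using assms by (intro nn_integral_cmult_indicator) auto
    finally show ?thesis .
  qed
  have f: "emeasure lborel (B \<inter> ball 0 rd) < \<infinity>"
    by (rule le_less_trans[OF emeasure_mono emeasure_ball_finite]) auto
  show "emeasure (density lborel (\<lambda>x. ennreal ld * indicator (ball 0 rd) x)) B < \<infinity>"
    using assms f by (simp add: e ennreal_mult_less_top)
  show "measure (density lborel (\<lambda>x. ennreal ld * indicator (ball 0 rd) x)) B = ld * measure lborel (B \<inter> ball 0 rd)"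
    using assms by (simp add: measure_def e enn2real_mult)
qed


lemma poisson_sets:
  assumes "poisson_pp M N mu" "B \<in> sets borel"
  shows "{\<omega> \<in> space M. count_pts (N \<omega>) B = k} \<in> sets M"
proof -
  have "N \<in> measurable M pp_sets" using assms unfolding poisson_pp_def by auto
  from measurable_sets[OF this pp_count_sets[OF assms(2), of k]]
  show ?thesis by (simp add: vimage_def Int_def conj_commute)
qed

lemma poisson_empty_sets:
  assumes "poisson_pp M N mu" "B \<in> sets borel"
  shows "{\<omega> \<in> space M. N \<omega> \<inter> B = {}} \<in> sets M"
  using poisson_sets[OF assms, of "enat 0"] by (simp add: count_pts_0_iff)

lemma poisson_zero:
  assumes "poisson_pp M N mu" "B \<in> sets borel" "emeasure mu B < \<infinity>"
  shows "measure M {\<omega> \<in> space M. N \<omega> \<inter> B = {}} = exp (- measure mu B)"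
proof -
  have "measure M {\<omega> \<in> space M. count_pts (N \<omega>) B = enat 0} = exp (- measure mu B) * measure mu B ^ 0 / fact 0"
    using assms unfolding poisson_pp_def by blast
  then show ?thesis by (simp add: count_pts_0_iff)
qed

lemma poisson_series:
  fixes c \<mu> :: real
  shows "(\<lambda>k. c ^ k * (exp (- \<mu>) * \<mu> ^ k / fact k)) sums exp (- \<mu> * (1 - c))"
proof -
  have "(\<lambda>k. exp (- \<mu>) * ((c * \<mu>) ^ k /\<^sub>R fact k)) sums (exp (- \<mu>) * exp (c * \<mu>))"
    by (intro sums_mult exp_converges)
  moreover have "exp (- \<mu>) * exp (c * \<mu>) = exp (- \<mu> * (1 - c))"
    by (simp add: exp_add[symmetric] algebra_simps)
  moreover have "\<And>k. exp (- \<mu>) * ((c * \<mu>) ^ k /\<^sub>R fact k) = c ^ k * (exp (- \<mu>) * \<mu> ^ k / fact k)"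
    by (simp add: power_mult_distrib divide_inverse scaleR_conv_of_real)
  ultimately show ?thesis by simp
qed

lemma poisson_facts:
  assumes pp: "poisson_pp M N mu" and B: "B \<in> sets borel" and fin: "emeasure mu B < \<infinity>" and c: "0 \<le> c"
  shows "AE \<omega> in M. count_pts (N \<omega>) B \<noteq> \<infinity>"
    "(\<integral>\<^sup>+\<omega>. (\<Sum>k. ennreal (c ^ k) * indicator {\<omega> \<in> space M. count_pts (N \<omega>) B = enat k} \<omega>) \<partial>M)
       = ennreal (exp (- measure mu B * (1 - c)))"
proof -
  interpret prob_space M using pp unfolding poisson_pp_def by auto
  define A where "A k = {\<omega> \<in> space M. count_pts (N \<omega>) B = enat k}" for k
  define \<mu> where "\<mu> = measure mu B"
  have Asets: "A k \<in> sets M" for k unfolding A_def by (rule poisson_sets[OF pp B])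
  have PA: "measure M (A k) = exp (- \<mu>) * \<mu> ^ k / fact k" for k
    using pp B fin unfolding poisson_pp_def A_def \<mu>_def by blast
  have disj: "disjoint_family A" unfolding disjoint_family_on_def A_def by auto
  have "(\<lambda>k. measure M (A k)) sums measure M (\<Union>k. A k)"
    using Asets disj by (intro finite_measure_UNION) auto
  moreover have "(\<lambda>k. measure M (A k)) sums 1"
    using poisson_series[of 1 \<mu>] by (simp add: PA)
  ultimately have "prob (\<Union>k. A k) = 1" using sums_unique2 by blast
  from AE_prob_1[OF this]
  show "AE \<omega> in M. count_pts (N \<omega>) B \<noteq> \<infinity>"
    by eventually_elim (auto simp: A_def)
  have "(\<integral>\<^sup>+\<omega>. (\<Sum>k. ennreal (c ^ k) * indicator (A k) \<omega>) \<partial>M) = (\<Sum>k. \<integral>\<^sup>+\<omega>. ennreal (c ^ k) * indicator (A k) \<omega> \<partial>M)"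
    using Asets by (intro nn_integral_suminf) auto
  also have "\<dots> = (\<Sum>k. ennreal (c ^ k * (exp (- \<mu>) * \<mu> ^ k / fact k)))"
  proof -
    have nn: "0 \<le> exp (- \<mu>) * \<mu> ^ k / fact k" for k using PA[of k] measure_nonneg[of M "A k"] by simp
    show ?thesis
      using Asets c nn by (simp add: nn_integral_cmult_indicator emeasure_eq_measure PA ennreal_mult[symmetric])
  qed
  also have "\<dots> = ennreal (\<Sum>k. c ^ k * (exp (- \<mu>) * \<mu> ^ k / fact k))"
  proof (rule suminf_ennreal2)
    show "0 \<le> c ^ k * (exp (- \<mu>) * \<mu> ^ k / fact k)" for k
      using c PA[of k] measure_nonneg[of M "A k"] by (metis zero_le_power mult_nonneg_nonneg)
    show "summable (\<lambda>k. c ^ k * (exp (- \<mu>) * \<mu> ^ k / fact k))"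
      using poisson_series by (rule sums_summable)
  qed
  also have "\<dots> = ennreal (exp (- \<mu> * (1 - c)))"
    using poisson_series sums_unique by metis
  finally show "(\<integral>\<^sup>+\<omega>. (\<Sum>k. ennreal (c ^ k) * indicator {\<omega> \<in> space M. count_pts (N \<omega>) B = enat k} \<omega>) \<partial>M)
       = ennreal (exp (- measure mu B * (1 - c)))" unfolding A_def \<mu>_def .
qed



lemma space_PiM_UNIV: "space (PiM UNIV (\<lambda>_. M)) = UNIV" if "space M = UNIV"
  using that by (simp add: space_PiM PiE_UNIV_domain)

lemma hit_decomp:
  fixes Q :: "'a::euclidean_space set" and s :: real and x :: 'a and S :: "'a set"
  assumes Q: "\<And>U. open U \<Longrightarrow> U \<noteq> {} \<Longrightarrow> \<exists>q\<in>Q. q \<in> U"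
  shows "S \<inter> ball (- x) s \<noteq> {} \<longleftrightarrow>
    (\<exists>q\<in>Q. \<exists>n::nat. x \<in> ball q (1 / Suc n) \<and> S \<inter> ball (- q) (s - 1 / Suc n) \<noteq> {})"
proof
  assume "S \<inter> ball (- x) s \<noteq> {}"
  then obtain y where y: "y \<in> S" "dist (- x) y < s" by auto
  define \<delta> where "\<delta> = s - dist (- x) y"
  have "\<delta> > 0" using y by (simp add: \<delta>_def)
  then obtain n :: nat where n: "inverse (real (Suc n)) < \<delta> / 2"
    using reals_Archimedean[of "\<delta>/2"] by auto
  obtain q where q: "q \<in> Q" "q \<in> ball x (1 / Suc n)"
    using Q[of "ball x (1 / Suc n)"] by auto
  have "dist (- q) y \<le> dist (- q) (- x) + dist (- x) y" by (rule dist_triangle)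
  also have "dist (- q) (- x) = dist x q" by (simp add: dist_norm norm_minus_commute algebra_simps)
  finally have t: "dist (- q) y \<le> dist x q + dist (- x) y" .
  define e where "e = 1 / real (Suc n)"
  have "e < \<delta> / 2" using n by (simp add: e_def inverse_eq_divide)
  moreover have "dist x q < e" using q(2) by (simp add: e_def)
  ultimately have "dist (- q) y < s - 1 / Suc n"
    using t unfolding e_def[symmetric] \<delta>_def by (simp add: field_simps)
  then show "\<exists>q\<in>Q. \<exists>n::nat. x \<in> ball q (1 / Suc n) \<and> S \<inter> ball (- q) (s - 1 / Suc n) \<noteq> {}"
    using q y by (auto simp: dist_commute intro!: bexI[of _ q] exI[of _ n])
next
  assume "\<exists>q\<in>Q. \<exists>n::nat. x \<in> ball q (1 / Suc n) \<and> S \<inter> ball (- q) (s - 1 / Suc n) \<noteq> {}"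
  then obtain q n y where "x \<in> ball q (1 / Suc n)" "y \<in> S" "dist (- q) y < s - 1 / Suc n" by auto
  moreover have "dist (- x) y \<le> dist (- x) (- q) + dist (- q) y" by (rule dist_triangle)
  moreover have "dist (- x) (- q) = dist q x" by (simp add: dist_norm norm_minus_commute algebra_simps)
  ultimately have "dist (- x) y < s" by simp
  then show "S \<inter> ball (- x) s \<noteq> {}" using \<open>y \<in> S\<close> by auto
qed

lemma Gs_sets:
  fixes s :: real
  shows "{(x, d). \<forall>i. (d :: nat \<Rightarrow> 'a::euclidean_space set) i \<inter> ball (- (x :: nat \<Rightarrow> 'a) i) s = {}}
     \<in> sets (PiM UNIV (\<lambda>_. borel) \<Otimes>\<^sub>M PiM UNIV (\<lambda>_. pp_sets))"
proof -
  have "\<exists>Q::'a set. countable Q \<and> (\<forall>U. open U \<longrightarrow> U \<noteq> {} \<longrightarrow> (\<exists>q\<in>Q. q \<in> U))"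
    by (rule countable_dense_exists)
  then obtain Q :: "'a set" where Qc: "countable Q" and Q: "\<And>U. open U \<Longrightarrow> U \<noteq> {} \<Longrightarrow> \<exists>q\<in>Q. q \<in> U"
    by blast
  let ?P = "PiM UNIV (\<lambda>_. borel) \<Otimes>\<^sub>M PiM UNIV (\<lambda>_. pp_sets) :: ((nat \<Rightarrow> 'a) \<times> (nat \<Rightarrow> 'a set)) measure"
  have sp1: "space (PiM UNIV (\<lambda>_. borel) :: (nat \<Rightarrow> 'a) measure) = UNIV" by (rule space_PiM_UNIV) simp
  have sp2: "space (PiM UNIV (\<lambda>_. pp_sets) :: (nat \<Rightarrow> 'a set) measure) = UNIV" by (rule space_PiM_UNIV) (simp add: space_pp_sets)
  define R where "R i qn = {x :: nat \<Rightarrow> 'a. x i \<in> ball (fst qn) (1 / Suc (snd qn))} \<times>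
       {d :: nat \<Rightarrow> 'a set. d i \<inter> ball (- fst qn) (s - 1 / Suc (snd qn)) \<noteq> {}}" for i and qn :: "'a \<times> nat"
  have R: "R i qn \<in> sets ?P" for i qn
  proof -
    have "(\<lambda>x. x i) -` ball (fst qn) (1 / Suc (snd qn)) \<inter> space (PiM UNIV (\<lambda>_. borel) :: (nat \<Rightarrow> 'a) measure)
        \<in> sets (PiM UNIV (\<lambda>_. borel))"
      by (rule measurable_sets[OF measurable_component_singleton]) auto
    moreover have "(\<lambda>d. d i) -` (UNIV - {S. S \<inter> ball (- fst qn) (s - 1 / Suc (snd qn)) = {}}) \<inter> space (PiM UNIV (\<lambda>_. pp_sets) :: (nat \<Rightarrow> 'a set) measure)
        \<in> sets (PiM UNIV (\<lambda>_. pp_sets))"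
      by (rule measurable_sets[OF measurable_component_singleton])
         (auto intro!: sets.compl_sets[of _ pp_sets, simplified space_pp_sets] pp_empty_sets)
    moreover have "R i qn = ((\<lambda>x. x i) -` ball (fst qn) (1 / Suc (snd qn)) \<inter> space (PiM UNIV (\<lambda>_. borel) :: (nat \<Rightarrow> 'a) measure)) \<times>
       ((\<lambda>d. d i) -` (UNIV - {S. S \<inter> ball (- fst qn) (s - 1 / Suc (snd qn)) = {}}) \<inter> space (PiM UNIV (\<lambda>_. pp_sets) :: (nat \<Rightarrow> 'a set) measure))"
      unfolding R_def sp1 sp2 by blast
    ultimately show ?thesis by (simp only:) (rule pair_measureI)
  qed
  have H: "{(x, d). (d :: nat \<Rightarrow> 'a set) i \<inter> ball (- (x :: nat \<Rightarrow> 'a) i) s \<noteq> {}} = (\<Union>qn\<in>Q \<times> UNIV. R i qn)" for i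
  proof -
    have *: "((d :: nat \<Rightarrow> 'a set) i \<inter> ball (- (x :: nat \<Rightarrow> 'a) i) s \<noteq> {}) = (\<exists>q\<in>Q. \<exists>n. (x, d) \<in> R i (q, n))" for x d
      using hit_decomp[OF Q, of "d i" "x i" s] unfolding R_def by simp
    show ?thesis by (auto simp only: * UN_iff mem_Collect_eq case_prod_conv mem_Sigma_iff split: prod.splits)
  qed
  have "(\<Union>qn\<in>Q \<times> UNIV. R i qn) \<in> sets ?P" for i
    using Qc R by (intro sets.countable_UN') auto
  then have "(\<Union>i. (\<Union>qn\<in>Q \<times> UNIV. R i qn)) \<in> sets ?P" by auto
  then have "space ?P - (\<Union>i. (\<Union>qn\<in>Q \<times> UNIV. R i qn)) \<in> sets ?P" by auto
  also have "space ?P - (\<Union>i. (\<Union>qn\<in>Q \<times> UNIV. R i qn)) = {(x, d). \<forall>i. d i \<inter> ball (- x i) s = {}}"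
    unfolding space_pair_measure sp1 sp2 H[symmetric] by auto
  finally show ?thesis .
qed



lemma cond_formula:
  fixes M :: "'w measure" and X :: "nat \<Rightarrow> 'w \<Rightarrow> 'a::euclidean_space" and D :: "nat \<Rightarrow> 'w \<Rightarrow> 'a set"
    and s :: real
  assumes P: "prob_space M"
    and mX: "(\<lambda>\<omega> i. X i \<omega>) \<in> measurable M (PiM UNIV (\<lambda>_. borel))"
    and mD: "(\<lambda>\<omega> j. D j \<omega>) \<in> measurable M (PiM UNIV (\<lambda>_. pp_sets))"
    and ind: "\<And>A B. A \<in> sets (PiM UNIV (\<lambda>_. borel)) \<Longrightarrow> B \<in> sets (PiM UNIV (\<lambda>_. pp_sets)) \<Longrightarrow>
       measure M (((\<lambda>\<omega> i. X i \<omega>) -` A \<inter> space M) \<inter> ((\<lambda>\<omega> j. D j \<omega>) -` B \<inter> space M))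
        = measure M ((\<lambda>\<omega> i. X i \<omega>) -` A \<inter> space M) * measure M ((\<lambda>\<omega> j. D j \<omega>) -` B \<inter> space M)"
  shows "{\<omega> \<in> space M. \<forall>i. D i \<omega> \<inter> ball (- X i \<omega>) s = {}} \<in> sets M"
    "emeasure M {\<omega> \<in> space M. \<forall>i. D i \<omega> \<inter> ball (- X i \<omega>) s = {}}
      = (\<integral>\<^sup>+\<omega>. emeasure M {\<omega>' \<in> space M. \<forall>i. D i \<omega>' \<inter> ball (- X i \<omega>) s = {}} \<partial>M)"
proof -
  interpret prob_space M by (rule P)
  define S where "S = (PiM UNIV (\<lambda>_. borel) :: (nat \<Rightarrow> 'a) measure)"
  define T where "T = (PiM UNIV (\<lambda>_. pp_sets) :: (nat \<Rightarrow> 'a set) measure)"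
  define Xv where "Xv = (\<lambda>\<omega> i. X i \<omega>)"
  define Dv where "Dv = (\<lambda>\<omega> j. D j \<omega>)"
  define G where "G = {(x, d). \<forall>i. (d :: nat \<Rightarrow> 'a set) i \<inter> ball (- (x :: nat \<Rightarrow> 'a) i) s = {}}"
  define PX where "PX = distr M S Xv"
  define PD where "PD = distr M T Dv"
  have mX': "Xv \<in> measurable M S" using mX by (simp add: Xv_def S_def)
  have mD': "Dv \<in> measurable M T" using mD by (simp add: Dv_def T_def)
  have eq: "PX \<Otimes>\<^sub>M PD = distr M (S \<Otimes>\<^sub>M T) (\<lambda>\<omega>. (Xv \<omega>, Dv \<omega>))"
  proof -
    have XY: "(\<lambda>\<omega>. (Xv \<omega>, Dv \<omega>)) \<in> measurable M (S \<Otimes>\<^sub>M T)" using mX' mD' by (rule measurable_Pair)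
    interpret X: prob_space PX unfolding PX_def by (rule prob_space_distr[OF mX'])
    interpret Y: prob_space PD unfolding PD_def by (rule prob_space_distr[OF mD'])
    show ?thesis
    proof (rule pair_measure_eqI)
      show "sigma_finite_measure PX" ..
      show "sigma_finite_measure PD" ..
      fix A B assume A: "A \<in> sets PX" and B: "B \<in> sets PD"
      have A': "A \<in> sets S" and B': "B \<in> sets T" using A B by (simp_all add: PX_def PD_def)
      have "emeasure (distr M (S \<Otimes>\<^sub>M T) (\<lambda>\<omega>. (Xv \<omega>, Dv \<omega>))) (A \<times> B) = emeasure M ((\<lambda>x. (Xv x, Dv x)) -` (A \<times> B) \<inter> space M)"
        using A' B' by (intro emeasure_distr[OF XY]) auto
      also have "(\<lambda>x. (Xv x, Dv x)) -` (A \<times> B) \<inter> space M = (Xv -` A \<inter> space M) \<inter> (Dv -` B \<inter> space M)" by auto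
      also have "emeasure M \<dots> = emeasure M (Xv -` A \<inter> space M) * emeasure M (Dv -` B \<inter> space M)"
        using ind[OF A'[unfolded S_def] B'[unfolded T_def]]
        by (simp add: emeasure_eq_measure measure_nonneg ennreal_mult Xv_def Dv_def)
      also have "\<dots> = emeasure PX A * emeasure PD B"
        using mX' mD' A' B' by (simp add: emeasure_distr PX_def PD_def)
      finally show "emeasure PX A * emeasure PD B = emeasure (distr M (S \<Otimes>\<^sub>M T) (\<lambda>\<omega>. (Xv \<omega>, Dv \<omega>))) (A \<times> B)" by simp
    qed (simp add: PX_def PD_def)
  qed
  have G: "G \<in> sets (S \<Otimes>\<^sub>M T)" unfolding G_def S_def T_def by (rule Gs_sets)
  have ev: "{\<omega> \<in> space M. \<forall>i. D i \<omega> \<inter> ball (- X i \<omega>) s = {}} = (\<lambda>\<omega>. (Xv \<omega>, Dv \<omega>)) -` G \<inter> space M"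
    unfolding G_def Xv_def Dv_def by auto
  have mXD: "(\<lambda>\<omega>. (Xv \<omega>, Dv \<omega>)) \<in> measurable M (S \<Otimes>\<^sub>M T)"
    using mX' mD' by (rule measurable_Pair)
  show evs: "{\<omega> \<in> space M. \<forall>i. D i \<omega> \<inter> ball (- X i \<omega>) s = {}} \<in> sets M"
    unfolding ev by (rule measurable_sets[OF mXD G])
  interpret PD: prob_space PD unfolding PD_def by (rule prob_space_distr[OF mD'])
  have G': "G \<in> sets (PX \<Otimes>\<^sub>M PD)" unfolding eq using G by simp
  have "emeasure M {\<omega> \<in> space M. \<forall>i. D i \<omega> \<inter> ball (- X i \<omega>) s = {}}
      = emeasure (distr M (S \<Otimes>\<^sub>M T) (\<lambda>\<omega>. (Xv \<omega>, Dv \<omega>))) G"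
    unfolding ev by (rule emeasure_distr[OF mXD G, symmetric])
  also have "\<dots> = emeasure (PX \<Otimes>\<^sub>M PD) G" unfolding eq ..
  also have "\<dots> = (\<integral>\<^sup>+x. emeasure PD (Pair x -` G) \<partial>PX)"
    by (rule PD.emeasure_pair_measure_alt[OF G'])
  also have "\<dots> = (\<integral>\<^sup>+\<omega>. emeasure PD (Pair (Xv \<omega>) -` G) \<partial>M)"
    unfolding PX_def
    by (rule nn_integral_distr[OF mX']) (rule PD.measurable_emeasure_Pair[OF G', unfolded PX_def])
  also have "\<dots> = (\<integral>\<^sup>+\<omega>. emeasure M {\<omega>' \<in> space M. \<forall>i. D i \<omega>' \<inter> ball (- X i \<omega>) s = {}} \<partial>M)"
  proof (rule nn_integral_cong)
    fix \<omega>
    have sl: "Pair (Xv \<omega>) -` G \<in> sets T" using G by (rule sets_Pair1)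
    have "emeasure PD (Pair (Xv \<omega>) -` G) = emeasure M (Dv -` (Pair (Xv \<omega>) -` G) \<inter> space M)"
      unfolding PD_def by (rule emeasure_distr[OF mD' sl])
    also have "Dv -` (Pair (Xv \<omega>) -` G) \<inter> space M = {\<omega>' \<in> space M. \<forall>i. D i \<omega>' \<inter> ball (- X i \<omega>) s = {}}"
      unfolding G_def Xv_def Dv_def by auto
    finally show "emeasure PD (Pair (Xv \<omega>) -` G) = emeasure M {\<omega>' \<in> space M. \<forall>i. D i \<omega>' \<inter> ball (- X i \<omega>) s = {}}" .
  qed
  finally show "emeasure M {\<omega> \<in> space M. \<forall>i. D i \<omega> \<inter> ball (- X i \<omega>) s = {}}
      = (\<integral>\<^sup>+\<omega>. emeasure M {\<omega>' \<in> space M. \<forall>i. D i \<omega>' \<inter> ball (- X i \<omega>) s = {}} \<partial>M)" .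
qed



definition hfun :: "real \<Rightarrow> real \<Rightarrow> real \<Rightarrow> 'a::euclidean_space \<Rightarrow> real" where
  "hfun ld rd s y = exp (- ld * measure lborel (ball (- y) s \<inter> ball 0 rd))"

lemma hfun_pos: "hfun ld rd s y > 0" by (simp add: hfun_def)

locale dsetup =
  fixes M :: "'w measure" and D :: "nat \<Rightarrow> 'w \<Rightarrow> 'a::euclidean_space set" and ld rd :: real
  assumes P: "prob_space M" and ld: "ld \<ge> 0"
    and daughters: "\<And>j. poisson_pp M (D j) (density lborel (\<lambda>x. ennreal ld * indicator (ball (0::'a) rd) x))"
    and indep_d: "prob_space.indep_vars M (\<lambda>_. pp_sets) D UNIV"
begin

interpretation prob_space M by (rule P)

lemma ev_sets: "{\<omega> \<in> space M. \<forall>j\<in>I. D j \<omega> \<inter> ball (- x j) s = {}} \<in> sets M"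
  by (rule sets.sets_Collect_countable_All') (auto intro: poisson_empty_sets[OF daughters])

lemma single_prob: "measure M {\<omega> \<in> space M. D j \<omega> \<inter> ball (- y) s = {}} = hfun ld rd s y"
  using poisson_zero[OF daughters, of "ball (- y) s" j] daughter_measure[of "ball (- y) s" ld rd] ld
  by (simp add: hfun_def)

lemma fin_prob:
  assumes "finite J" "J \<noteq> {}"
  shows "measure M {\<omega> \<in> space M. \<forall>j\<in>J. D j \<omega> \<inter> ball (- x j) s = {}} = (\<Prod>j\<in>J. hfun ld rd s (x j))"
proof -
  have ind: "indep_sets (\<lambda>j. {D j -` A \<inter> space M | A. A \<in> sets pp_sets}) UNIV"
    using indep_d[unfolded indep_vars_def2] by (rule conjunct2)
  define A where "A j = D j -` {S. S \<inter> ball (- x j) s = {}} \<inter> space M" for j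
  have memA: "\<forall>j\<in>J. A j \<in> {D j -` A \<inter> space M | A. A \<in> sets pp_sets}"
  proof
    fix j assume "j \<in> J"
    show "A j \<in> {D j -` A \<inter> space M | A. A \<in> sets pp_sets}"
      unfolding A_def by (rule CollectI, rule exI[of _ "{S. S \<inter> ball (- x j) s = {}}"], rule conjI[OF refl pp_empty_sets]) simp
  qed
  have "prob (\<Inter>j\<in>J. A j) = (\<Prod>j\<in>J. prob (A j))"
    by (rule indep_setsD[OF ind subset_UNIV assms(2) assms(1) memA])
  moreover have "(\<Inter>j\<in>J. A j) = {\<omega> \<in> space M. \<forall>j\<in>J. D j \<omega> \<inter> ball (- x j) s = {}}"
    using assms(2) unfolding A_def by blast
  moreover have "prob (A j) = hfun ld rd s (x j)" for j
  proof -
    have "A j = {\<omega> \<in> space M. D j \<omega> \<inter> ball (- x j) s = {}}" unfolding A_def by blast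
    then show ?thesis using single_prob[of j "x j" s] by simp
  qed
  ultimately show ?thesis by simp
qed

lemma bound_above:
  fixes x :: "nat \<Rightarrow> 'a" and B :: "'a set"
  assumes cnt: "count_pts (range x) B = enat k" and hc: "\<And>y. y \<in> B \<Longrightarrow> hfun ld rd s y \<le> c"
  shows "measure M {\<omega> \<in> space M. \<forall>i. D i \<omega> \<inter> ball (- x i) s = {}} \<le> c ^ k"
proof -
  have fin: "finite (range x \<inter> B)" and ck: "card (range x \<inter> B) = k"
    using cnt unfolding count_pts_def by (auto split: if_splits)
  define J where "J = inv x ` (range x \<inter> B)"
  have inj: "inj_on (inv x) (range x \<inter> B)"
    by (rule inj_onI) (metis IntD1 f_inv_into_f)
  have xJ: "x j \<in> B" if "j \<in> J" for j using that unfolding J_def by (auto simp: f_inv_into_f)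
  have finJ: "finite J" using fin by (simp add: J_def)
  have cJ: "card J = k" unfolding J_def using card_image[OF inj] ck by simp
  show ?thesis
  proof (cases "k = 0")
    case True then show ?thesis by (simp only: power_0 prob_le_1)
  next
    case False
    then have Jne: "J \<noteq> {}" using cJ by auto
    have "measure M {\<omega> \<in> space M. \<forall>i. D i \<omega> \<inter> ball (- x i) s = {}}
        \<le> measure M {\<omega> \<in> space M. \<forall>j\<in>J. D j \<omega> \<inter> ball (- x j) s = {}}"
      by (rule finite_measure_mono[OF _ ev_sets]) blast
    also have "\<dots> = (\<Prod>j\<in>J. hfun ld rd s (x j))" by (rule fin_prob[OF finJ Jne])
    also have "\<dots> \<le> (\<Prod>j\<in>J. c)"
      by (rule prod_mono) (auto simp: hc xJ less_imp_le[OF hfun_pos])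
    also have "\<dots> = c ^ k" using cJ by simp
    finally show ?thesis .
  qed
qed

lemma bound_below:
  fixes x :: "nat \<Rightarrow> 'a" and B :: "'a set"
  assumes cnt: "count_pts (range x) B = enat k" and injx: "inj x"
    and hc: "\<And>y::'a. hfun ld rd s y \<ge> c" and h1: "\<And>y::'a. y \<notin> B \<Longrightarrow> hfun ld rd s y = 1"
    and c0: "0 \<le> c" and c1: "c \<le> 1"
  shows "measure M {\<omega> \<in> space M. \<forall>i. D i \<omega> \<inter> ball (- x i) s = {}} \<ge> c ^ k"
proof -
  have fin: "finite (range x \<inter> B)" and ck: "card (range x \<inter> B) = k"
    using cnt unfolding count_pts_def by (auto split: if_splits)
  define E where "E m = {\<omega> \<in> space M. \<forall>j\<in>{..<m}. D j \<omega> \<inter> ball (- x j) s = {}}" for m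
  have Es: "range E \<subseteq> sets M" unfolding E_def using ev_sets by auto
  have dec: "decseq E" unfolding decseq_def E_def by auto
  have lim: "(\<lambda>m. measure M (E m)) \<longlonglongrightarrow> measure M (\<Inter>m. E m)"
    by (rule finite_Lim_measure_decseq[OF Es dec])
  have inter: "(\<Inter>m. E m) = {\<omega> \<in> space M. \<forall>i. D i \<omega> \<inter> ball (- x i) s = {}}"
    unfolding E_def by auto
  have "c ^ k \<le> measure M (E m)" for m
  proof (cases "m = 0")
    case True
    then have "E m = space M" by (simp add: E_def)
    then show ?thesis using c0 c1 by (simp add: power_le_one measure_def emeasure_space_1)
  next
    case False
    have "c ^ k \<le> c ^ card {j \<in> {..<m}. x j \<in> B}"
    proof (rule power_decreasing[OF _ c0 c1])
      have "card {j \<in> {..<m}. x j \<in> B} \<le> card (range x \<inter> B)"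
        by (rule card_inj_on_le[OF inj_on_subset[OF injx]]) (auto simp: fin)
      then show "card {j \<in> {..<m}. x j \<in> B} \<le> k" using ck by simp
    qed
    also have "\<dots> = (\<Prod>j\<in>{..<m}. if x j \<in> B then c else 1)"
      by (simp add: prod.If_cases Int_def)
    also have "\<dots> \<le> (\<Prod>j\<in>{..<m}. hfun ld rd s (x j))"
      by (rule prod_mono) (auto simp: c0 h1 intro: hc)
    also have "\<dots> = measure M (E m)"
      unfolding E_def using False by (intro fin_prob[symmetric]) auto
    finally show ?thesis .
  qed
  then have "\<exists>N. \<forall>n\<ge>N. c ^ k \<le> measure M (E n)" by blast
  then have "c ^ k \<le> measure M (\<Inter>m. E m)"
    by (rule LIMSEQ_le_const[OF lim])
  then show ?thesis unfolding inter .
qed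

end



lemma ball_fmeas: "ball (c::'a::euclidean_space) t \<in> fmeasurable lborel"
  using emeasure_ball_finite[of c t] by (simp add: fmeasurable_def)

lemma hfun_ge:
  fixes y :: "'a::euclidean_space"
  assumes "s \<ge> 0" "rd \<ge> 0" "ld \<ge> 0"
  shows "hfun ld rd s y \<ge> exp (- ld * measure lborel (ball (0::'a) 1) * min s rd ^ DIM('a))"
proof -
  let ?v = "measure lborel (ball (0::'a) 1)"
  let ?m = "measure lborel (ball (- y) s \<inter> ball 0 rd)"
  have "?m \<le> measure lborel (ball (- y) s)"
    by (rule measure_mono_fmeasurable[OF _ _ ball_fmeas]) auto
  also have "\<dots> = ?v * s ^ DIM('a)" using vol_ball[OF assms(1)] .
  finally have m1: "?m \<le> ?v * s ^ DIM('a)" .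
  have "?m \<le> measure lborel (ball (0::'a) rd)"
    by (rule measure_mono_fmeasurable[OF _ _ ball_fmeas]) auto
  also have "\<dots> = ?v * rd ^ DIM('a)" using vol_ball[OF assms(2)] .
  finally have m2: "?m \<le> ?v * rd ^ DIM('a)" .
  have "?m \<le> ?v * min s rd ^ DIM('a)"
    using m1 m2 by (cases "s \<le> rd") (auto simp: min_def)
  then have "ld * ?m \<le> ld * (?v * min s rd ^ DIM('a))" by (rule mult_left_mono) (rule assms(3))
  then show ?thesis unfolding hfun_def by (simp add: mult.assoc)
qed

lemma hfun_far:
  fixes y :: "'a::euclidean_space"
  assumes "norm y \<ge> s + rd"
  shows "hfun ld rd s y = 1"
proof -
  have "ball (- y) s \<inter> ball 0 rd = {}"
  proof (rule ccontr)
    assume "ball (- y) s \<inter> ball 0 rd \<noteq> {}"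
    then obtain z where z: "dist (- y) z < s" "norm z < rd" by auto
    have "norm y \<le> dist (- y) z + norm z"
      using norm_triangle_ineq[of "-y - z" z] by (simp add: dist_norm)
    then show False using z assms by simp
  qed
  then show ?thesis by (simp add: hfun_def)
qed

lemma hfun_near:
  fixes y :: "'a::euclidean_space"
  assumes "r > 0" "rd > 0" "norm y < \<bar>r - rd\<bar>"
  shows "hfun ld rd r y = exp (- ld * measure lborel (ball (0::'a) 1) * min r rd ^ DIM('a))"
proof (cases "rd \<le> r")
  case True
  have "ball 0 rd \<subseteq> ball (- y) r"
  proof
    fix z :: 'a assume "z \<in> ball 0 rd"
    then have "norm z < rd" by simp
    moreover have "dist (- y) z \<le> norm y + norm z"
      using norm_triangle_ineq[of "-y" "-z"] by (simp add: dist_norm)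
    ultimately show "z \<in> ball (- y) r" using assms True by simp
  qed
  then have "ball (- y) r \<inter> ball 0 rd = ball 0 rd" by blast
  then show ?thesis using True vol_ball[of rd "0::'a"] assms by (simp add: hfun_def min_def mult.assoc)
next
  case False
  have "ball (- y) r \<subseteq> ball 0 rd"
  proof
    fix z :: 'a assume "z \<in> ball (- y) r"
    then have "dist (- y) z < r" by simp
    moreover have "norm z \<le> norm y + dist (- y) z"
      using norm_triangle_ineq[of "y" "-y - z"] by (simp add: dist_norm norm_minus_commute)
    ultimately show "z \<in> ball 0 rd" using assms False by simp
  qed
  then have "ball (- y) r \<inter> ball 0 rd = ball (- y) r" by blast
  then show ?thesis using False vol_ball[of r "- y"] assms by (simp add: hfun_def min_def mult.assoc)
qed

lemma contact_lt_iff: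
  fixes X :: "nat \<Rightarrow> 'w \<Rightarrow> 'a::euclidean_space"
  shows "contact_dist (matern_cluster X D \<omega>) < ereal t \<longleftrightarrow> (\<exists>i. D i \<omega> \<inter> ball (- X i \<omega>) t \<noteq> {})"
proof -
  have d: "dist (- a) y = norm (a + y)" for a y :: 'a
  proof -
    have "dist (- a) y = norm (- a - y)" by (simp only: dist_norm)
    also have "- a - y = - (a + y)" by simp
    finally show ?thesis by (simp only: norm_minus_cancel)
  qed
  show ?thesis
  proof -
    have e: "(D i \<omega> \<inter> ball (- X i \<omega>) t \<noteq> {}) \<longleftrightarrow> (\<exists>y\<in>D i \<omega>. norm (X i \<omega> + y) < t)" for i
      by (auto simp: d)
    show ?thesis unfolding contact_dist_def matern_cluster_def INF_less_iff e by auto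
  qed
qed

lemma ereal_le_iff_seq: "(a::ereal) \<le> ereal r \<longleftrightarrow> (\<forall>n::nat. a < ereal (r + 1 / Suc n))"
proof
  assume "a \<le> ereal r"
  then show "\<forall>n::nat. a < ereal (r + 1 / Suc n)"
    by (auto intro: le_less_trans)
next
  assume H: "\<forall>n::nat. a < ereal (r + 1 / Suc n)"
  show "a \<le> ereal r"
  proof (rule ereal_le_epsilon2)
    fix e :: real assume "0 < e"
    then obtain n :: nat where n: "inverse (real (Suc n)) < e"
      using reals_Archimedean by blast
    have "a < ereal (r + 1 / Suc n)" using H by blast
    also have "\<dots> \<le> ereal r + ereal e" using n by (simp add: inverse_eq_divide)
    finally show "a \<le> ereal r + ereal e" by simp
  qed
qed



theorem theorem3:
  fixes M :: "'w measure"
    and X :: "nat \<Rightarrow> 'w \<Rightarrow> 'a::euclidean_space"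
    and D :: "nat \<Rightarrow> 'w \<Rightarrow> 'a set"
    and lp ld rd r :: real
  assumes "prob_space M"
    and "lp > 0" and "ld > 0" and "rd > 0" and "r > 0"
    and parents: "poisson_pp M (\<lambda>\<omega>. range (\<lambda>i. X i \<omega>)) (density lborel (\<lambda>_. ennreal lp))"
    and enum: "AE \<omega> in M. inj (\<lambda>i. X i \<omega>)"
    and daughters: "\<And>j. poisson_pp M (D j)
                         (density lborel (\<lambda>x. ennreal ld * indicator (ball (0::'a) rd) x))"
    and indep_d: "prob_space.indep_vars M (\<lambda>_. pp_sets) D UNIV"
    and meas_p: "(\<lambda>\<omega> i. X i \<omega>) \<in> measurable M (PiM UNIV (\<lambda>_. borel))"
    and indep_pd: "prob_space.indep_set M
                     (sets (vimage_algebra (space M) (\<lambda>\<omega> i. X i \<omega>) (PiM UNIV (\<lambda>_. borel))))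
                     (sets (vimage_algebra (space M) (\<lambda>\<omega> j. D j \<omega>) (PiM UNIV (\<lambda>_. pp_sets))))"
  shows "1 - exp (- measure lborel (ball (0::'a) 1) * lp * \<bar>r - rd\<bar> ^ DIM('a)
              * (1 - exp (- ld * measure lborel (ball (0::'a) 1) * min r rd ^ DIM('a))))
           \<le> measure M {\<omega> \<in> space M. contact_dist (matern_cluster X D \<omega>) \<le> ereal r}
       \<and> measure M {\<omega> \<in> space M. contact_dist (matern_cluster X D \<omega>) \<le> ereal r}
           \<le> 1 - exp (- measure lborel (ball (0::'a) 1) * lp * (r + rd) ^ DIM('a)
              * (1 - exp (- measure lborel (ball (0::'a) 1) * ld * min r rd ^ DIM('a))))"
proof -
  interpret prob_space M by fact
  interpret ds: dsetup M D ld rd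
    using assms(1) assms(3) daughters indep_d by unfold_locales auto
  let ?v = "measure lborel (ball (0::'a) 1)"
  let ?n = "DIM('a)"
  have v0: "?v \<ge> 0" by (rule measure_nonneg)
  define Aev where "Aev s = {\<omega> \<in> space M. \<forall>i. D i \<omega> \<inter> ball (- X i \<omega>) s = {}}" for s
  define C where "C = {\<omega> \<in> space M. contact_dist (matern_cluster X D \<omega>) \<le> ereal r}"
  have spB: "space (PiM UNIV (\<lambda>_. borel) :: (nat \<Rightarrow> 'a) measure) = UNIV" by (rule space_PiM_UNIV) simp
  have spP: "space (PiM UNIV (\<lambda>_. pp_sets) :: (nat \<Rightarrow> 'a set) measure) = UNIV"
    by (rule space_PiM_UNIV) (simp add: space_pp_sets)
  have mD: "(\<lambda>\<omega> j. D j \<omega>) \<in> measurable M (PiM UNIV (\<lambda>_. pp_sets))"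
  proof (rule measurable_PiM_single')
    show "D i \<in> measurable M pp_sets" for i using daughters[of i] unfolding poisson_pp_def by blast
    show "(\<lambda>\<omega> i. D i \<omega>) \<in> space M \<rightarrow> (\<Pi>\<^sub>E i\<in>UNIV. space pp_sets)"
      by (simp add: space_pp_sets PiE_UNIV_domain)
  qed
  have s1: "sets (vimage_algebra (space M) (\<lambda>\<omega> i. X i \<omega>) (PiM UNIV (\<lambda>_. borel)))
      = {(\<lambda>\<omega> i. X i \<omega>) -` A \<inter> space M | A. A \<in> sets (PiM UNIV (\<lambda>_. borel))}"
    by (rule sets_vimage_algebra2) (simp add: spB)
  have s2: "sets (vimage_algebra (space M) (\<lambda>\<omega> j. D j \<omega>) (PiM UNIV (\<lambda>_. pp_sets)))
      = {(\<lambda>\<omega> j. D j \<omega>) -` A \<inter> space M | A. A \<in> sets (PiM UNIV (\<lambda>_. pp_sets))}"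
    by (rule sets_vimage_algebra2) (simp add: spP)
  have ind: "measure M (((\<lambda>\<omega> i. X i \<omega>) -` A \<inter> space M) \<inter> ((\<lambda>\<omega> j. D j \<omega>) -` B \<inter> space M))
        = measure M ((\<lambda>\<omega> i. X i \<omega>) -` A \<inter> space M) * measure M ((\<lambda>\<omega> j. D j \<omega>) -` B \<inter> space M)"
    if A: "A \<in> sets (PiM UNIV (\<lambda>_. borel))" and B: "B \<in> sets (PiM UNIV (\<lambda>_. pp_sets))" for A B
  proof -
    have "\<forall>a\<in>{(\<lambda>\<omega> i. X i \<omega>) -` A \<inter> space M | A. A \<in> sets (PiM UNIV (\<lambda>_. borel))}.
          \<forall>b\<in>{(\<lambda>\<omega> j. D j \<omega>) -` A \<inter> space M | A. A \<in> sets (PiM UNIV (\<lambda>_. pp_sets))}.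
          prob (a \<inter> b) = prob a * prob b"
      using indep_pd unfolding indep_sets2_eq s1 s2 by blast
    then show ?thesis using A B by blast
  qed
  have Asets: "Aev s \<in> sets M" for s
    unfolding Aev_def by (rule cond_formula(1)[OF assms(1) meas_p mD ind])
  have Aeq: "emeasure M (Aev s) = (\<integral>\<^sup>+\<omega>. ennreal (measure M {\<omega>' \<in> space M. \<forall>i. D i \<omega>' \<inter> ball (- X i \<omega>) s = {}}) \<partial>M)" for s
  proof -
    have "emeasure M (Aev s) = (\<integral>\<^sup>+\<omega>. emeasure M {\<omega>' \<in> space M. \<forall>i. D i \<omega>' \<inter> ball (- X i \<omega>) s = {}} \<partial>M)"
      unfolding Aev_def by (rule cond_formula(2)[OF assms(1) meas_p mD ind])
    also have "\<dots> = (\<integral>\<^sup>+\<omega>. ennreal (measure M {\<omega>' \<in> space M. \<forall>i. D i \<omega>' \<inter> ball (- X i \<omega>) s = {}}) \<partial>M)"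
      by (intro nn_integral_cong) (simp add: emeasure_eq_measure)
    finally show ?thesis .
  qed
  have hit: "\<omega> \<notin> Aev t \<longleftrightarrow> contact_dist (matern_cluster X D \<omega>) < ereal t" if "\<omega> \<in> space M" for \<omega> t
    using that contact_lt_iff[of X D \<omega> t] by (auto simp: Aev_def)
  have C_eq: "C = {\<omega> \<in> space M. \<forall>n::nat. \<not> (\<forall>i. D i \<omega> \<inter> ball (- X i \<omega>) (r + 1 / Suc n) = {})}"
    unfolding C_def ereal_le_iff_seq contact_lt_iff by auto
  have Csets: "C \<in> sets M"
    unfolding C_eq
    by (intro sets.sets_Collect_countable_All sets.sets_Collect_neg Asets[unfolded Aev_def])

  define \<rho> where "\<rho> = \<bar>r - rd\<bar>"
  define c where "c = exp (- ld * ?v * min r rd ^ ?n)"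
  have \<rho>0: "\<rho> \<ge> 0" by (simp add: \<rho>_def)
  have finB: "emeasure (density lborel (\<lambda>_. ennreal lp)) (ball (0::'a) \<rho>) < \<infinity>"
    using parent_measure(1)[of "ball (0::'a) \<rho>" lp] emeasure_ball_finite[of "0::'a" \<rho>] assms(2) by simp
  have \<mu>: "measure (density lborel (\<lambda>_. ennreal lp)) (ball (0::'a) \<rho>) = lp * (?v * \<rho> ^ ?n)"
    using parent_measure(2)[of "ball (0::'a) \<rho>" lp] emeasure_ball_finite[of "0::'a" \<rho>] assms(2) vol_ball[OF \<rho>0, of 0] by simp
  have c0: "0 \<le> c" by (simp add: c_def)
  have bB: "ball (0::'a) \<rho> \<in> sets borel" by simp
  note pf = poisson_facts[OF parents bB finB c0]
  have "emeasure M (Aev r) \<le> (\<integral>\<^sup>+\<omega>. (\<Sum>k. ennreal (c ^ k) *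
      indicator {\<omega> \<in> space M. count_pts (range (\<lambda>i. X i \<omega>)) (ball 0 \<rho>) = enat k} \<omega>) \<partial>M)"
    unfolding Aeq
  proof (rule nn_integral_mono_AE)
    show "AE \<omega> in M. ennreal (measure M {\<omega>' \<in> space M. \<forall>i. D i \<omega>' \<inter> ball (- X i \<omega>) r = {}})
        \<le> (\<Sum>k. ennreal (c ^ k) * indicator {\<omega> \<in> space M. count_pts (range (\<lambda>i. X i \<omega>)) (ball 0 \<rho>) = enat k} \<omega>)"
      using pf(1) AE_space
    proof eventually_elim
      case (elim \<omega>)
      then obtain k where k: "count_pts (range (\<lambda>i. X i \<omega>)) (ball 0 \<rho>) = enat k"
        by (cases "count_pts (range (\<lambda>i. X i \<omega>)) (ball 0 \<rho>)") auto
      have "(\<Sum>j. ennreal (c ^ j) * indicator {\<omega> \<in> space M. count_pts (range (\<lambda>i. X i \<omega>)) (ball 0 \<rho>) = enat j} \<omega>)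
          = (\<Sum>j\<in>{k}. ennreal (c ^ j) * indicator {\<omega> \<in> space M. count_pts (range (\<lambda>i. X i \<omega>)) (ball 0 \<rho>) = enat j} \<omega>)"
        by (rule suminf_finite) (auto simp: k)
      also have "\<dots> = ennreal (c ^ k)" using elim k by simp
      finally have S: "(\<Sum>j. ennreal (c ^ j) * indicator {\<omega> \<in> space M. count_pts (range (\<lambda>i. X i \<omega>)) (ball 0 \<rho>) = enat j} \<omega>) = ennreal (c ^ k)" .
      have "measure M {\<omega>' \<in> space M. \<forall>i. D i \<omega>' \<inter> ball (- X i \<omega>) r = {}} \<le> c ^ k"
      proof (rule ds.bound_above[OF k])
        fix y :: 'a assume "y \<in> ball 0 \<rho>"
        then have "norm y < \<bar>r - rd\<bar>" by (simp add: \<rho>_def)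
        then show "hfun ld rd r y \<le> c" using hfun_near[OF assms(5) assms(4), of y ld] by (simp add: c_def)
      qed
      then show ?case unfolding S by (rule ennreal_leI)
    qed
  qed
  also have "\<dots> = ennreal (exp (- (lp * (?v * \<rho> ^ ?n)) * (1 - c)))" using pf(2) \<mu> by simp
  finally have "measure M (Aev r) \<le> exp (- (lp * (?v * \<rho> ^ ?n)) * (1 - c))"
    by (simp add: emeasure_eq_measure)
  moreover have "space M - Aev r \<subseteq> C"
    using hit unfolding C_def by (auto intro: less_imp_le)
  then have "measure M (space M - Aev r) \<le> measure M C"
    by (rule finite_measure_mono[OF _ Csets])
  ultimately have LB: "1 - exp (- (lp * (?v * \<rho> ^ ?n)) * (1 - c)) \<le> measure M C"
    using prob_compl[OF Asets[of r]] by simp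

  have UB: "measure M C \<le> 1 - exp (- ?v * lp * (s + rd) ^ ?n * (1 - exp (- ?v * ld * min s rd ^ ?n)))"
    if sr: "s > r" for s
  proof -
    define c' where "c' = exp (- ld * ?v * min s rd ^ ?n)"
    have s0: "s \<ge> 0" using sr assms(5) by simp
    have srd: "s + rd \<ge> 0" using s0 assms(4) by simp
    have finB': "emeasure (density lborel (\<lambda>_. ennreal lp)) (ball (0::'a) (s + rd)) < \<infinity>"
      using parent_measure(1)[of "ball (0::'a) (s + rd)" lp] emeasure_ball_finite[of "0::'a" "s + rd"] assms(2) by simp
    have \<mu>': "measure (density lborel (\<lambda>_. ennreal lp)) (ball (0::'a) (s + rd)) = lp * (?v * (s + rd) ^ ?n)"
      using parent_measure(2)[of "ball (0::'a) (s + rd)" lp] emeasure_ball_finite[of "0::'a" "s + rd"] assms(2) vol_ball[OF srd, of 0] by simp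
    have c'0: "0 \<le> c'" by (simp add: c'_def)
    have c'1: "c' \<le> 1"
    proof -
      have "0 \<le> ld * ?v * min s rd ^ ?n" using assms(3,4) s0 v0 by simp
      then show ?thesis by (simp add: c'_def)
    qed
    have bB': "ball (0::'a) (s + rd) \<in> sets borel" by simp
    note pf' = poisson_facts[OF parents bB' finB' c'0]
    have "ennreal (exp (- (lp * (?v * (s + rd) ^ ?n)) * (1 - c'))) = (\<integral>\<^sup>+\<omega>. (\<Sum>k. ennreal (c' ^ k) *
      indicator {\<omega> \<in> space M. count_pts (range (\<lambda>i. X i \<omega>)) (ball 0 (s + rd)) = enat k} \<omega>) \<partial>M)"
      using pf'(2) \<mu>' by simp
    also have "\<dots> \<le> emeasure M (Aev s)"
      unfolding Aeq
    proof (rule nn_integral_mono_AE)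
      show "AE \<omega> in M. (\<Sum>k. ennreal (c' ^ k) * indicator {\<omega> \<in> space M. count_pts (range (\<lambda>i. X i \<omega>)) (ball 0 (s + rd)) = enat k} \<omega>)
         \<le> ennreal (measure M {\<omega>' \<in> space M. \<forall>i. D i \<omega>' \<inter> ball (- X i \<omega>) s = {}})"
        using pf'(1) AE_space enum
      proof eventually_elim
        case (elim \<omega>)
        then obtain k where k: "count_pts (range (\<lambda>i. X i \<omega>)) (ball 0 (s + rd)) = enat k"
          by (cases "count_pts (range (\<lambda>i. X i \<omega>)) (ball 0 (s + rd))") auto
        have "(\<Sum>j. ennreal (c' ^ j) * indicator {\<omega> \<in> space M. count_pts (range (\<lambda>i. X i \<omega>)) (ball 0 (s + rd)) = enat j} \<omega>)
            = (\<Sum>j\<in>{k}. ennreal (c' ^ j) * indicator {\<omega> \<in> space M. count_pts (range (\<lambda>i. X i \<omega>)) (ball 0 (s + rd)) = enat j} \<omega>)"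
          by (rule suminf_finite) (auto simp: k)
        also have "\<dots> = ennreal (c' ^ k)" using elim k by simp
        finally have S: "(\<Sum>j. ennreal (c' ^ j) * indicator {\<omega> \<in> space M. count_pts (range (\<lambda>i. X i \<omega>)) (ball 0 (s + rd)) = enat j} \<omega>) = ennreal (c' ^ k)" .
        have "c' ^ k \<le> measure M {\<omega>' \<in> space M. \<forall>i. D i \<omega>' \<inter> ball (- X i \<omega>) s = {}}"
        proof (rule ds.bound_below[OF k _ _ _ c'0 c'1])
          show "inj (\<lambda>i. X i \<omega>)" using elim by blast
          show "c' \<le> hfun ld rd s y" for y :: 'a
            unfolding c'_def using hfun_ge[OF s0 less_imp_le[OF assms(4)] less_imp_le[OF assms(3)], of y] .
          show "hfun ld rd s y = 1" if "y \<notin> ball 0 (s + rd)" for y :: 'a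
            using that by (intro hfun_far) simp
        qed
        then show ?case unfolding S by (rule ennreal_leI)
      qed
    qed
    finally have "exp (- (lp * (?v * (s + rd) ^ ?n)) * (1 - c')) \<le> measure M (Aev s)"
      by (simp add: emeasure_eq_measure)
    moreover have "C \<subseteq> space M - Aev s"
    proof
      fix \<omega> assume "\<omega> \<in> C"
      then have "\<omega> \<in> space M" "contact_dist (matern_cluster X D \<omega>) \<le> ereal r" by (auto simp: C_def)
      moreover have "ereal r < ereal s" using sr by simp
      ultimately have "contact_dist (matern_cluster X D \<omega>) < ereal s" "\<omega> \<in> space M"
        using le_less_trans by blast+
      then show "\<omega> \<in> space M - Aev s" using hit by blast
    qed
    then have "measure M C \<le> measure M (space M - Aev s)"
      by (rule finite_measure_mono) (use Asets in auto)
    ultimately have "measure M C \<le> 1 - exp (- (lp * (?v * (s + rd) ^ ?n)) * (1 - c'))"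
      using prob_compl[OF Asets[of s]] by simp
    also have "- (lp * (?v * (s + rd) ^ ?n)) * (1 - c') = - ?v * lp * (s + rd) ^ ?n * (1 - exp (- ?v * ld * min s rd ^ ?n))"
      by (simp add: c'_def mult_ac)
    finally show ?thesis .
  qed
  define F where "F e = 1 - exp (- ?v * lp * (r + e + rd) ^ ?n * (1 - exp (- ?v * ld * min (r + e) rd ^ ?n)))" for e :: real
  have contF: "isCont F 0" unfolding F_def by (intro continuous_intros)
  have lim0: "(\<lambda>n. 1 / real (Suc n)) \<longlonglongrightarrow> 0"
    using LIMSEQ_inverse_real_of_nat by (simp add: inverse_eq_divide)
  have limF: "(\<lambda>n. F (1 / real (Suc n))) \<longlonglongrightarrow> F 0"
    by (rule isCont_tendsto_compose[OF contF lim0])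
  have "measure M C \<le> F (1 / real (Suc n))" for n
    unfolding F_def by (rule UB) simp
  then have "measure M C \<le> F 0"
    by (intro LIMSEQ_le_const[OF limF]) blast
  then have UB0: "measure M C \<le> 1 - exp (- ?v * lp * (r + rd) ^ ?n * (1 - exp (- ?v * ld * min r rd ^ ?n)))"
    by (simp add: F_def)
  have eqL: "- (lp * (?v * \<rho> ^ ?n)) * (1 - c) = - ?v * lp * \<bar>r - rd\<bar> ^ ?n * (1 - exp (- ld * ?v * min r rd ^ ?n))"
    by (simp add: c_def \<rho>_def mult_ac)
  have LB': "1 - exp (- ?v * lp * \<bar>r - rd\<bar> ^ ?n * (1 - exp (- ld * ?v * min r rd ^ ?n))) \<le> measure M C"
    using LB unfolding eqL .
  show ?thesis using LB' UB0 unfolding C_def by blast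
qed


end
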